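(* Let $n\ge 3$, let $M\in\mathbb{R}^{n\times n}$ be a primitive doubly-stochastic matrix (nonnegative entries, $M\mathbf{1}=\mathbf{1}$, $M^\top\mathbf{1}=\mathbf{1}$, some power of $M$ entrywise positive), and let $\nu>0$. Let $\mathcal{P}_{\perp} = I_n - \frac1n \mathbf{1}\mathbf{1}^\top$ and $\mathcal{V}_{\perp} = \{x : \langle x,\mathbf{1}\rangle = 0\}$. Let $\mathbf{x}_{\perp},\mathbf{x}'_{\perp}\in\mathcal{V}_{\perp}$, set $\mathbf{s}=M\mathbf{x}_{\perp}$, $\mathbf{s}'=M\mathbf{x}'_{\perp}$, and let $\boldsymbol{\xi},\boldsymbol{\xi}'$ be independent random vectors with $\boldsymbol{\xi},\boldsymbol{\xi}'\sim\mathcal{N}(\mathbf{0},\frac{\nu^2}{n}I_n)$. Define the normalized outputs \[ \mathbf{u} = \frac{\mathcal{P}_{\perp}(\mathbf{s}+\boldsymbol{\xi})}{\|\mathcal{P}_{\perp}(\mathbf{s}+\boldsymbol{\xi})\|_2},\qquad \mathbf{v} = \frac{\mathcal{P}_{\perp}(\mathbf{s}'+\boldsymbol{\xi}')}{\|\mathcal{P}_{\perp}(\mathbf{s}'+\boldsymbol{\xi}')\|_2}, \] and the spectral signal-to-noise ratio \[ \gamma := \frac{\max(\|\mathbf{s}\|_2,\|\mathbf{s}'\|_2)}{\mathbb{E}\big[\|\mathcal{P}_{\perp}\boldsymbol{\xi}\|_2\big]}. \] Assume $\gamma\le 1/8$. Then for any $\epsilon>0$ and any failure tolerance $\delta\in(0,1)$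 there exist constants $C$ and $c>0$ such that, with probability at least $1-\delta-Ce^{-cn\epsilon^2}$, \[ |\langle \mathbf{u},\mathbf{v}\rangle| \le \epsilon + 8\gamma . \]
   Context: $\mathbf{1}$ is the all-ones vector in $\mathbb{R}^n$; $\|\cdot\|_2$ is the Euclidean norm and $\langle\cdot,\cdot\rangle$ the Euclidean inner product. The map $\mathbf{y}\mapsto \mathcal{P}_{\perp}\mathbf{y}/\|\mathcal{P}_{\perp}\mathbf{y}\|_2$ is (up to the factor $\sqrt n$) Layer Normalization without affine parameters. *)

theory Defs
  imports "HOL-Probability.Probability" "Jordan_Normal_Form.Matrix"
begin

definition ones_vec :: "nat \<Rightarrow> real vec" where
  "ones_vec n = vec n (\<lambda>_. 1)"

definition vnorm :: "real vec \<Rightarrow> real" where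
  "vnorm v = sqrt (scalar_prod v v)"

definition proj_perp :: "nat \<Rightarrow> real mat" where
  "proj_perp n = 1\<^sub>m n - (1 / real n) \<cdot>\<^sub>m mat n n (\<lambda>_. 1)"

definition layer_norm :: "nat \<Rightarrow> real vec \<Rightarrow> real vec" where
  "layer_norm n y = (1 / vnorm (proj_perp n *\<^sub>v y)) \<cdot>\<^sub>v (proj_perp n *\<^sub>v y)"

definition doubly_stochastic :: "nat \<Rightarrow> real mat \<Rightarrow> bool" where
  "doubly_stochastic n M \<longleftrightarrow> M \<in> carrier_mat n n
     \<and> (\<forall>i<n. \<forall>j<n. M $$ (i,j) \<ge> 0)
     \<and> M *\<^sub>v ones_vec n = ones_vec n
     \<and> transpose_mat M *\<^sub>v ones_vec n = ones_vec n"

definition primitive_mat :: "nat \<Rightarrow> real mat \<Rightarrow> bool" where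
  "primitive_mat n M \<longleftrightarrow> (\<exists>k. \<forall>i<n. \<forall>j<n. (M ^\<^sub>m k) $$ (i,j) > 0)"

text \<open>Law of a Gaussian vector N(0, sigma^2 I_n): product of n independent
  N(0, sigma^2) coordinates, as a measure on functions nat => real
  (coordinates 0..n-1).\<close>
definition gauss_vec :: "nat \<Rightarrow> real \<Rightarrow> (nat \<Rightarrow> real) measure" where
  "gauss_vec n \<sigma> = PiM {..<n} (\<lambda>_. density lborel (normal_density 0 \<sigma>))"

end

theory Submission
  imports Defs
begin


lemma normal_facts:
  fixes \<sigma> :: real assumes s: "0 < \<sigma>"
  defines "N \<equiv> density lborel (normal_density 0 \<sigma>)"
  shows "prob_space N"
    and "\<And>k. integrable N (\<lambda>x. x ^ k)"
    and "(\<integral>x. x \<partial>N) = 0"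
    and "(\<integral>x. x^2 \<partial>N) = \<sigma>^2"
    and "(\<integral>x. x^4 \<partial>N) = 3 * \<sigma>^4"
proof -
  show "prob_space N" unfolding N_def by (rule prob_space_normal_density[OF s])
  have int: "integrable N f \<longleftrightarrow> integrable lborel (\<lambda>x. normal_density 0 \<sigma> x * f x)"
    if [measurable]: "f \<in> borel_measurable borel" for f :: "real \<Rightarrow> real"
    unfolding N_def by (subst integrable_density) auto
  have intg: "integral\<^sup>L N f = integral\<^sup>L lborel (\<lambda>x. normal_density 0 \<sigma> x * f x)"
    if [measurable]: "f \<in> borel_measurable borel" for f :: "real \<Rightarrow> real"
    unfolding N_def by (subst integral_density) auto
  show "integrable N (\<lambda>x. x ^ k)" for k
    using integrable_normal_moment[OF s, of 0 k] by (subst int) auto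
  show "(\<integral>x. x \<partial>N) = 0"
    using integral_normal_moment_odd[OF s, of 0 0] by (subst intg) auto
  show "(\<integral>x. x^2 \<partial>N) = \<sigma>^2"
  proof -
    have "(LBINT x. normal_density 0 \<sigma> x * (x - 0) ^ (2 * 1)) = \<sigma>^2"
      using s by (subst integral_normal_moment_even[OF s]) (simp add: field_simps)
    then show ?thesis by (subst intg) auto
  qed
  show "(\<integral>x. x^4 \<partial>N) = 3 * \<sigma>^4"
  proof -
    have "(LBINT x. normal_density 0 \<sigma> x * (x - 0) ^ (2 * 2)) = 3 * \<sigma>^4"
      using s by (subst integral_normal_moment_even[OF s]) (simp add: field_simps fact_numeral)
    then show ?thesis by (subst intg) auto
  qed
qed

lemma gauss_sum_sq:
  fixes \<sigma> :: real and g :: "nat \<Rightarrow> real \<Rightarrow> real"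
  assumes s: "0 < \<sigma>"
  defines "N \<equiv> density lborel (normal_density 0 \<sigma>)"
  assumes i1: "\<And>i. i < n \<Longrightarrow> integrable N (g i)"
    and i2: "\<And>i. i < n \<Longrightarrow> integrable N (\<lambda>x. (g i x)^2)"
    and m0: "\<And>i. i < n \<Longrightarrow> integral\<^sup>L N (g i) = 0"
  shows "integrable (gauss_vec n \<sigma>) (\<lambda>\<xi>. (\<Sum>i<n. g i (\<xi> i))^2)"
    and "(\<integral>\<xi>. (\<Sum>i<n. g i (\<xi> i))^2 \<partial>gauss_vec n \<sigma>) = (\<Sum>i<n. \<integral>x. (g i x)^2 \<partial>N)"
proof -
  have pN: "prob_space N" unfolding N_def by (rule prob_space_normal_density[OF s])
  interpret P: product_sigma_finite "\<lambda>_::nat. N"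
    unfolding product_sigma_finite_def using pN prob_space_imp_sigma_finite by blast
  have G: "gauss_vec n \<sigma> = PiM {..<n} (\<lambda>_. N)" unfolding gauss_vec_def N_def ..
  define F where "F i j k = (\<lambda>x. (if k = i then g i x else 1) * (if k = j then g j x else (1::real)))" for i j k :: nat
  have Fprod: "(\<Prod>k<n. F i j k (\<xi> k)) = g i (\<xi> i) * g j (\<xi> j)" if "i < n" "j < n" for i j \<xi>
  proof -
    have "(\<Prod>k<n. F i j k (\<xi> k)) = (\<Prod>k<n. if k = i then g i (\<xi> k) else 1) * (\<Prod>k<n. if k = j then g j (\<xi> k) else 1)"
      unfolding F_def by (rule prod.distrib)
    then show ?thesis using that by (simp add: prod.delta')
  qed
  have Fint: "integrable N (F i j k)" if "i < n" "j < n" for i j k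
  proof -
    interpret prob_space N by (rule pN)
    show ?thesis
    proof (cases "k = i")
      case True
      then show ?thesis using i1[OF \<open>j<n\<close>] i2[OF \<open>i<n\<close>] i1[OF \<open>i<n\<close>]
        by (cases "k = j") (auto simp: F_def power2_eq_square)
    next
      case False
      then show ?thesis using i1[OF \<open>j<n\<close>]
        by (cases "k = j") (auto simp: F_def)
    qed
  qed
  have T_int: "integrable (gauss_vec n \<sigma>) (\<lambda>\<xi>. g i (\<xi> i) * g j (\<xi> j))" if "i < n" "j < n" for i j
    using P.product_integrable_prod[of "{..<n}" "F i j"] Fint[OF that] Fprod[OF that] unfolding G by simp
  have T_val: "(\<integral>\<xi>. g i (\<xi> i) * g j (\<xi> j) \<partial>gauss_vec n \<sigma>) = (if i = j then \<integral>x. (g i x)^2 \<partial>N else 0)"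
    if "i < n" "j < n" for i j
  proof -
    have "(\<integral>\<xi>. g i (\<xi> i) * g j (\<xi> j) \<partial>gauss_vec n \<sigma>) = (\<Prod>k<n. integral\<^sup>L N (F i j k))"
      using P.product_integral_prod[of "{..<n}" "F i j"] Fint[OF that] Fprod[OF that] unfolding G by simp
    also have "\<dots> = (if i = j then \<integral>x. (g i x)^2 \<partial>N else 0)"
    proof (cases "i = j")
      case True
      have "(\<Prod>k<n. integral\<^sup>L N (F i j k)) = (\<Prod>k<n. if k = i then \<integral>x. (g i x)^2 \<partial>N else 1)"
        using True prob_space.prob_space[OF pN]
        by (intro prod.cong) (auto simp: F_def power2_eq_square)
      then show ?thesis using True that by (simp add: prod.delta')
    next
      case False
      have "integral\<^sup>L N (F i j i) = 0" using False m0[OF \<open>i<n\<close>] by (simp add: F_def)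
      have "(\<Prod>k<n. integral\<^sup>L N (F i j k)) = 0"
        using \<open>integral\<^sup>L N (F i j i) = 0\<close> that by (intro prod_zero) auto
      then show ?thesis using False by simp
    qed
    finally show ?thesis .
  qed
  have sq: "(\<Sum>i<n. g i (\<xi> i))^2 = (\<Sum>i<n. \<Sum>j<n. g i (\<xi> i) * g j (\<xi> j))" for \<xi>
    by (simp add: power2_eq_square sum_product)
  show "integrable (gauss_vec n \<sigma>) (\<lambda>\<xi>. (\<Sum>i<n. g i (\<xi> i))^2)"
    unfolding sq by (intro Bochner_Integration.integrable_sum T_int) auto
  have "(\<integral>\<xi>. (\<Sum>i<n. g i (\<xi> i))^2 \<partial>gauss_vec n \<sigma>) = (\<Sum>i<n. \<Sum>j<n. \<integral>\<xi>. g i (\<xi> i) * g j (\<xi> j) \<partial>gauss_vec n \<sigma>)"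
    unfolding sq using T_int by (subst Bochner_Integration.integral_sum, force, intro sum.cong refl Bochner_Integration.integral_sum) auto
  also have "\<dots> = (\<Sum>i<n. \<Sum>j<n. if i = j then \<integral>x. (g i x)^2 \<partial>N else 0)"
    using T_val by (intro sum.cong refl) auto
  also have "\<dots> = (\<Sum>i<n. \<integral>x. (g i x)^2 \<partial>N)"
    by (simp add: sum.delta)
  finally show "(\<integral>\<xi>. (\<Sum>i<n. g i (\<xi> i))^2 \<partial>gauss_vec n \<sigma>) = (\<Sum>i<n. \<integral>x. (g i x)^2 \<partial>N)" .
qed



definition pp :: "nat \<Rightarrow> (nat \<Rightarrow> real) \<Rightarrow> nat \<Rightarrow> real" where
  "pp n y i = y i - (\<Sum>j<n. y j) / real n"

lemma proj_perp_mult: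
  assumes "y \<in> carrier_vec n"
  shows "proj_perp n *\<^sub>v y = vec n (pp n (\<lambda>i. y $ i))"
proof
  show "dim_vec (proj_perp n *\<^sub>v y) = dim_vec (vec n (pp n (\<lambda>i. y $ i)))"
    by (simp add: proj_perp_def)
  fix i assume "i < dim_vec (vec n (pp n (\<lambda>i. y $ i)))"
  then have i: "i < n" by simp
  have "(proj_perp n *\<^sub>v y) $ i = (\<Sum>j<n. ((if i = j then 1 else 0) - 1 / real n) * y $ j)"
    using i assms by (simp add: proj_perp_def scalar_prod_def atLeast0LessThan row_def)
  also have "\<dots> = y $ i - (\<Sum>j<n. y $ j) / real n"
  proof -
    have "(\<Sum>j<n. ((if i = j then 1 else 0) - 1 / real n) * y $ j)
        = (\<Sum>j<n. (if i = j then y $ j else 0)) - (\<Sum>j<n. y $ j / real n)"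
      by (subst sum_subtractf[symmetric]) (intro sum.cong refl, auto simp: algebra_simps)
    then show ?thesis using i by (simp add: sum_divide_distrib)
  qed
  finally show "(proj_perp n *\<^sub>v y) $ i = vec n (pp n (\<lambda>i. y $ i)) $ i"
    using i by (simp add: pp_def)
qed

lemma scalar_prod_vec: "scalar_prod (vec n a) (vec n b) = (\<Sum>i<n. a i * b i)"
  by (simp add: scalar_prod_def atLeast0LessThan)

lemma vnorm_vec: "vnorm (vec n a) = L2_set a {..<n}"
  by (simp add: vnorm_def scalar_prod_vec L2_set_def power2_eq_square)

lemma layer_norm_eq:
  assumes "y \<in> carrier_vec n"
  shows "layer_norm n y = vec n (\<lambda>i. pp n (\<lambda>i. y $ i) i / L2_set (pp n (\<lambda>i. y $ i)) {..<n})"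
  using assms by (auto simp: layer_norm_def proj_perp_mult vnorm_vec)

lemma pp_sq: "(\<Sum>i<n. (pp n y i)^2) = (\<Sum>i<n. (y i)^2) - (\<Sum>i<n. y i)^2 / real n"
proof (cases "n = 0")
  case False
  let ?S = "\<Sum>i<n. y i"
  have "(\<Sum>i<n. (pp n y i)^2) = (\<Sum>i<n. (y i)^2 - 2 * (?S / n) * y i + (?S/n)^2)"
    by (intro sum.cong refl) (simp add: pp_def power2_eq_square algebra_simps)
  also have "\<dots> = (\<Sum>i<n. (y i)^2) - 2 * (?S / n) * ?S + n * (?S/n)^2"
    by (simp add: sum.distrib sum_subtractf sum_distrib_left)
  also have "\<dots> = (\<Sum>i<n. (y i)^2) - ?S^2 / n"
    using False by (simp add: field_simps power2_eq_square)
  finally show ?thesis .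
qed simp

lemma pp_prod: "(\<Sum>i<n. pp n y i * pp n z i) = (\<Sum>i<n. y i * z i) - (\<Sum>i<n. y i) * (\<Sum>i<n. z i) / real n"
proof (cases "n = 0")
  case False
  let ?S = "\<Sum>i<n. y i" and ?T = "\<Sum>i<n. z i"
  have "(\<Sum>i<n. pp n y i * pp n z i) = (\<Sum>i<n. y i * z i - (?T / n) * y i - (?S / n) * z i + (?S/n)*(?T/n))"
    by (intro sum.cong refl) (simp add: pp_def algebra_simps)
  also have "\<dots> = (\<Sum>i<n. y i * z i) - (?T / n) * ?S - (?S / n) * ?T + n * ((?S/n)*(?T/n))"
    by (simp add: sum.distrib sum_subtractf sum_distrib_left)
  also have "\<dots> = (\<Sum>i<n. y i * z i) - ?S * ?T / n"
    using False by (simp add: field_simps)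
  finally show ?thesis .
qed simp

lemma pp_add: "pp n (\<lambda>i. y i + z i) i = pp n y i + pp n z i"
  by (simp add: pp_def sum.distrib add_divide_distrib)

lemma L2_pp_le: "L2_set (pp n y) {..<n} \<le> L2_set y {..<n}"
  unfolding L2_set_def using pp_sq[of n y]
  by (intro real_sqrt_le_mono) (simp add: divide_nonneg_nonneg)



lemma abs_sum_prod_le: "\<bar>\<Sum>i\<in>A. f i * g i\<bar> \<le> L2_set f A * L2_set g A"
  by (rule order.trans[OF sum_abs]) (simp add: abs_mult L2_set_mult_ineq)

lemma L2_diff_le: "L2_set w A - L2_set a A \<le> L2_set (\<lambda>i. a i + w i) A"
proof -
  have "L2_set w A \<le> L2_set (\<lambda>i. a i + w i) A + L2_set (\<lambda>i. - a i) A"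
    using L2_set_triangle_ineq[of "\<lambda>i. a i + w i" "\<lambda>i. - a i" A] by simp
  moreover have "L2_set (\<lambda>i. - a i) A = L2_set a A" by (simp add: L2_set_def)
  ultimately show ?thesis by simp
qed

lemma core_ineq:
  fixes a b w w' :: "nat \<Rightarrow> real" and A :: "nat set"
  assumes A: "L2_set a A \<le> \<gamma> * R" and B: "L2_set b A \<le> \<gamma> * R"
    and g: "0 \<le> \<gamma>" "\<gamma> \<le> 1/8" and e: "0 < \<eta>" "\<eta> \<le> 1/8" "\<eta> \<le> \<epsilon>/2" and R: "R > 0"
    and W: "L2_set w A \<ge> (1-\<eta>) * R" and W': "L2_set w' A \<ge> (1-\<eta>) * R"
    and WW: "\<bar>\<Sum>i\<in>A. w i * w' i\<bar> \<le> \<eta> * R^2"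
  shows "\<bar>\<Sum>i\<in>A. ((a i + w i) / L2_set (\<lambda>i. a i + w i) A) * ((b i + w' i) / L2_set (\<lambda>i. b i + w' i) A)\<bar>
           \<le> \<epsilon> + 8 * \<gamma>"
proof -
  define D where "D = L2_set (\<lambda>i. a i + w i) A"
  define D' where "D' = L2_set (\<lambda>i. b i + w' i) A"
  define Aa where "Aa = L2_set a A"
  define Bb where "Bb = L2_set b A"
  have gR: "\<gamma> * R \<le> 1/8 * R" "\<eta> * R \<le> 1/8 * R" using g e R by (auto intro: mult_right_mono)
  have "D \<ge> L2_set w A - Aa" unfolding D_def Aa_def by (rule L2_diff_le)
  then have D: "D \<ge> 3/4 * R" using W A gR unfolding Aa_def by (simp add: algebra_simps)
  have "D' \<ge> L2_set w' A - Bb" unfolding D'_def Bb_def by (rule L2_diff_le)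
  then have D': "D' \<ge> 3/4 * R" using W' B gR unfolding Bb_def by (simp add: algebra_simps)
  have W'le: "L2_set w' A \<le> D' + Bb" using \<open>D' \<ge> L2_set w' A - Bb\<close> by simp
  have Wle: "L2_set w A \<le> D + Aa" using \<open>D \<ge> L2_set w A - Aa\<close> by simp
  have Aa0: "Aa \<ge> 0" "Bb \<ge> 0" unfolding Aa_def Bb_def by simp_all
  have num: "(\<Sum>i\<in>A. (a i + w i) * (b i + w' i)) =
     (\<Sum>i\<in>A. a i * b i) + (\<Sum>i\<in>A. a i * w' i) + (\<Sum>i\<in>A. w i * b i) + (\<Sum>i\<in>A. w i * w' i)"
    by (simp add: algebra_simps sum.distrib)
  have t1: "\<bar>\<Sum>i\<in>A. a i * b i\<bar> \<le> Aa * Bb" unfolding Aa_def Bb_def by (rule abs_sum_prod_le)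
  have t2: "\<bar>\<Sum>i\<in>A. a i * w' i\<bar> \<le> Aa * (D' + Bb)"
    using abs_sum_prod_le[of a w' A] W'le Aa0 unfolding Aa_def by (smt (verit) mult_left_mono)
  have t3: "\<bar>\<Sum>i\<in>A. w i * b i\<bar> \<le> (D + Aa) * Bb"
    using abs_sum_prod_le[of w b A] Wle Aa0 unfolding Bb_def by (smt (verit) mult_right_mono)
  have Aa1: "Aa \<le> \<gamma> * (4/3 * D)" "Bb \<le> \<gamma> * (4/3 * D)" "Aa \<le> \<gamma> * (4/3 * D')" "Bb \<le> \<gamma> * (4/3 * D')"
  proof -
    have "\<gamma> * R \<le> \<gamma> * (4/3 * D)" "\<gamma> * R \<le> \<gamma> * (4/3 * D')" using mult_left_mono[OF D, of \<gamma>] mult_left_mono[OF D', of \<gamma>] g by (simp_all add: algebra_simps)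
    then show "Aa \<le> \<gamma> * (4/3 * D)" "Bb \<le> \<gamma> * (4/3 * D)" "Aa \<le> \<gamma> * (4/3 * D')" "Bb \<le> \<gamma> * (4/3 * D')"
      using A B unfolding Aa_def Bb_def by linarith+
  qed
  have Dp: "D > 0" "D' > 0" using D D' R by simp_all
  have "Aa * Bb \<le> (\<gamma> * (4/3 * D)) * (\<gamma> * (4/3 * D'))"
    using Aa1 Aa0 g Dp by (intro mult_mono) auto
  also have "\<dots> = (16/9) * (\<gamma> * \<gamma>) * (D * D')" by (simp add: algebra_simps)
  also have "\<dots> \<le> (16/9) * (\<gamma> * (1/8)) * (D * D')"
    using g Dp by (intro mult_right_mono mult_left_mono) auto
  finally have AB: "Aa * Bb \<le> (2/9) * \<gamma> * (D * D')" by simp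
  have AD': "Aa * D' \<le> (4/3) * \<gamma> * (D * D')"
    using mult_right_mono[OF Aa1(1), of D'] Dp by (simp add: algebra_simps)
  have BD: "D * Bb \<le> (4/3) * \<gamma> * (D * D')"
    using mult_left_mono[OF Aa1(4), of D] Dp by (simp add: algebra_simps)
  have RR: "\<eta> * R^2 \<le> \<eta> * (16/9) * (D * D')"
  proof -
    have "R^2 \<le> (4/3 * D) * (4/3 * D')" unfolding power2_eq_square
      using D D' R by (intro mult_mono) auto
    then show ?thesis using e by (simp add: mult_left_mono algebra_simps)
  qed
  have "\<bar>\<Sum>i\<in>A. (a i + w i) * (b i + w' i)\<bar> \<le> Aa * Bb + Aa * (D' + Bb) + (D + Aa) * Bb + \<eta> * R^2"
    unfolding num using t1 t2 t3 WW by linarith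
  also have "\<dots> = 3 * (Aa * Bb) + Aa * D' + D * Bb + \<eta> * R^2" by (simp add: algebra_simps)
  also have "\<dots> \<le> (\<epsilon> + 8 * \<gamma>) * (D * D')"
  proof -
    have P: "D * D' > 0" using Dp by simp
    have "\<eta> * (D * D') \<le> (\<epsilon>/2) * (D * D')" using e P by (intro mult_right_mono) auto
    moreover have "\<gamma> * (D * D') \<ge> 0" using g P by simp
    moreover have "\<epsilon> * (D * D') \<ge> 0" using e P by simp
    moreover have "(\<epsilon> + 8 * \<gamma>) * (D * D') = \<epsilon> * (D * D') + 8 * (\<gamma> * (D * D'))" by (simp add: algebra_simps)
    moreover have "\<eta> * (16/9) * (D * D') = 16/9 * (\<eta> * (D * D'))" by simp
    moreover have "\<epsilon> / 2 * (D * D') = 1/2 * (\<epsilon> * (D * D'))" by simp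
    moreover have "(2/9) * \<gamma> * (D * D') = 2/9 * (\<gamma> * (D * D'))" "(4/3) * \<gamma> * (D * D') = 4/3 * (\<gamma> * (D * D'))" by simp_all
    ultimately show ?thesis using AB AD' BD RR by linarith
  qed
  finally have fin: "\<bar>\<Sum>i\<in>A. (a i + w i) * (b i + w' i)\<bar> \<le> (\<epsilon> + 8 * \<gamma>) * (D * D')" .
  have "(\<Sum>i\<in>A. ((a i + w i) / D) * ((b i + w' i) / D')) = (\<Sum>i\<in>A. (a i + w i) * (b i + w' i)) / (D * D')"
    by (simp add: sum_divide_distrib)
  then show ?thesis using fin Dp unfolding D_def[symmetric] D'_def[symmetric]
    by (simp add: abs_div pos_divide_le_eq)
qed



context
  fixes \<sigma> :: real and n :: nat
  assumes s: "0 < \<sigma>"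
begin

definition "NN = density lborel (normal_density 0 \<sigma>)"

lemma G_prob: "prob_space (gauss_vec n \<sigma>)"
  unfolding gauss_vec_def
  by (intro prob_space_PiM prob_space_normal_density[OF s])

lemma space_G: "space (gauss_vec n \<sigma>) = PiE {..<n} (\<lambda>_. UNIV)"
  unfolding gauss_vec_def by (simp add: space_PiM)

lemma comp_meas[measurable]: "i < n \<Longrightarrow> (\<lambda>\<xi>. \<xi> i) \<in> borel_measurable (gauss_vec n \<sigma>)"
proof -
  assume i: "i < n"
  have "(\<lambda>\<xi>. \<xi> i) \<in> PiM {..<n} (\<lambda>_. NN) \<rightarrow>\<^sub>M NN" using i by (intro measurable_component_singleton) simp
  moreover have "sets NN = sets borel" unfolding NN_def by simp
  ultimately show ?thesis unfolding gauss_vec_def NN_def[symmetric]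
    using measurable_cong_sets[OF refl, of NN borel "PiM {..<n} (\<lambda>_. NN)"] by simp
qed

lemma E_lin:
  shows "integrable (gauss_vec n \<sigma>) (\<lambda>\<xi>. (\<Sum>i<n. c i * \<xi> i)^2)"
    and "(\<integral>\<xi>. (\<Sum>i<n. c i * \<xi> i)^2 \<partial>gauss_vec n \<sigma>) = \<sigma>^2 * (\<Sum>i<n. (c i)^2)"
proof -
  note nf = normal_facts[OF s, folded NN_def]
  have i1: "integrable NN (\<lambda>x. c i * x)" for i using nf(2)[of 1] by simp
  have i2: "integrable NN (\<lambda>x. (c i * x)^2)" for i using nf(2)[of 2] by (simp add: power_mult_distrib)
  have m0: "integral\<^sup>L NN (\<lambda>x. c i * x) = 0" for i using nf(3) by simp
  note L = gauss_sum_sq[OF s, of n "\<lambda>i x. c i * x", folded NN_def, OF i1 i2 m0]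
  show "integrable (gauss_vec n \<sigma>) (\<lambda>\<xi>. (\<Sum>i<n. c i * \<xi> i)^2)" using L(1) by simp
  have "(\<integral>x. (c i * x)^2 \<partial>NN) = (c i)^2 * \<sigma>^2" for i
    using nf(4) by (simp add: power_mult_distrib)
  then show "(\<integral>\<xi>. (\<Sum>i<n. c i * \<xi> i)^2 \<partial>gauss_vec n \<sigma>) = \<sigma>^2 * (\<Sum>i<n. (c i)^2)"
    using L(2) by (simp add: sum_distrib_left mult.commute)
qed

lemma E_sq1:
  assumes "i < n"
  shows "integrable (gauss_vec n \<sigma>) (\<lambda>\<xi>. (\<xi> i)^2)" "(\<integral>\<xi>. (\<xi> i)^2 \<partial>gauss_vec n \<sigma>) = \<sigma>^2"
proof -
  have eq: "(\<Sum>k<n. (if k = i then 1 else 0) * \<xi> k) = \<xi> i" for \<xi> :: "nat \<Rightarrow> real"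
  proof -
    have "(\<Sum>k<n. (if k = i then 1 else 0) * \<xi> k) = (\<Sum>k<n. if k = i then \<xi> k else 0)"
      by (intro sum.cong) auto
    then show ?thesis using assms by simp
  qed
  show "integrable (gauss_vec n \<sigma>) (\<lambda>\<xi>. (\<xi> i)^2)"
    using E_lin(1)[of "\<lambda>k. if k = i then 1 else 0"] unfolding eq .
  show "(\<integral>\<xi>. (\<xi> i)^2 \<partial>gauss_vec n \<sigma>) = \<sigma>^2"
    using E_lin(2)[of "\<lambda>k. if k = i then 1 else 0"] assms unfolding eq
    by (simp add: if_distrib[of "\<lambda>x. x^2"] cong: if_cong)
qed

lemma E_Q:
  shows "integrable (gauss_vec n \<sigma>) (\<lambda>\<xi>. \<Sum>i<n. (\<xi> i)^2)"
    and "(\<integral>\<xi>. (\<Sum>i<n. (\<xi> i)^2) \<partial>gauss_vec n \<sigma>) = n * \<sigma>^2"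
  using E_sq1 by (auto intro!: Bochner_Integration.integrable_sum simp: Bochner_Integration.integral_sum)

lemma E_Qvar:
  shows "integrable (gauss_vec n \<sigma>) (\<lambda>\<xi>. (\<Sum>i<n. (\<xi> i)^2 - \<sigma>^2)^2)"
    and "(\<integral>\<xi>. (\<Sum>i<n. (\<xi> i)^2 - \<sigma>^2)^2 \<partial>gauss_vec n \<sigma>) = 2 * n * \<sigma>^4"
proof -
  note nf = normal_facts[OF s, folded NN_def]
  interpret NP: prob_space NN by (rule nf(1))
  have i1: "integrable NN (\<lambda>x. x^2 - \<sigma>^2)" using nf(2)[of 2] by simp
  have eq2: "(\<lambda>x. (x^2 - \<sigma>^2)^2) = (\<lambda>x. x^4 - 2 * \<sigma>^2 * x^2 + \<sigma>^4)"
    by (auto simp: power2_eq_square power4_eq_xxxx algebra_simps)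
  have i2: "integrable NN (\<lambda>x. (x^2 - \<sigma>^2)^2)" unfolding eq2 using nf(2)[of 2] nf(2)[of 4] by simp
  have m0: "integral\<^sup>L NN (\<lambda>x. x^2 - \<sigma>^2) = 0"
    using nf(2)[of 2] nf(4) by (simp add: NP.prob_space)
  have v: "integral\<^sup>L NN (\<lambda>x. (x^2 - \<sigma>^2)^2) = 2 * \<sigma>^4"
    unfolding eq2 using nf(2)[of 2] nf(2)[of 4] nf(4) nf(5) by (simp add: NP.prob_space power2_eq_square power4_eq_xxxx)
  note L = gauss_sum_sq[OF s, of n "\<lambda>i x. x^2 - \<sigma>^2", folded NN_def, OF i1 i2 m0]
  show "integrable (gauss_vec n \<sigma>) (\<lambda>\<xi>. (\<Sum>i<n. (\<xi> i)^2 - \<sigma>^2)^2)" using L(1) by simp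
  show "(\<integral>\<xi>. (\<Sum>i<n. (\<xi> i)^2 - \<sigma>^2)^2 \<partial>gauss_vec n \<sigma>) = 2 * n * \<sigma>^4" using L(2) v by simp
qed

end


context
  fixes \<sigma> :: real and n :: nat
  assumes s: "0 < \<sigma>"
begin

abbreviation "G \<equiv> gauss_vec n \<sigma>"

lemmas cm[measurable] = comp_meas[OF s]

lemma E_pair:
  shows "integrable (G \<Otimes>\<^sub>M G) (\<lambda>p. (\<Sum>i<n. fst p i * snd p i)^2)"
    and "(\<integral>p. (\<Sum>i<n. fst p i * snd p i)^2 \<partial>(G \<Otimes>\<^sub>M G))  = real n * \<sigma>^4"
proof -
  interpret G: prob_space G by (rule G_prob[OF s])
  interpret P: pair_prob_space G G ..
  have meas: "(\<lambda>p. (\<Sum>i<n. fst p i * snd p i)^2) \<in> borel_measurable (G \<Otimes>\<^sub>M G)"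
    by measurable
  have inner: "(\<integral>y. (\<Sum>i<n. x i * y i)^2 \<partial>G) = \<sigma>^2 * (\<Sum>i<n. (x i)^2)" for x
    by (rule E_lin(2)[OF s, of n])
  have inner': "(\<integral>y. norm ((\<Sum>i<n. x i * y i)^2) \<partial>G) = \<sigma>^2 * (\<Sum>i<n. (x i)^2)" for x
    using inner[of x] by simp
  show I: "integrable (G \<Otimes>\<^sub>M G) (\<lambda>p. (\<Sum>i<n. fst p i * snd p i)^2)"
  proof (rule P.Fubini_integrable[OF meas])
    show "integrable G (\<lambda>x. \<integral>y. norm ((\<Sum>i<n. fst (x, y) i * snd (x, y) i)^2) \<partial>G)"
      using E_Q(1)[OF s, of n] by (simp add: inner inner')
    show "AE x in G. integrable G (\<lambda>y. (\<Sum>i<n. fst (x, y) i * snd (x, y) i)^2)"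
      using E_lin(1)[OF s, of n] by simp
  qed
  have "(\<integral>p. (\<Sum>i<n. fst p i * snd p i)^2 \<partial>(G \<Otimes>\<^sub>M G)) = (\<integral>x. \<integral>y. (\<Sum>i<n. x i * y i)^2 \<partial>G \<partial>G)"
    using P.integral_fst'[OF I] by simp
  also have "\<dots> = (\<integral>x. \<sigma>^2 * (\<Sum>i<n. (x i)^2) \<partial>G)" by (simp add: inner)
  also have "\<dots>  = real n * \<sigma>^4" using E_Q(2)[OF s, of n] by (simp add: power2_eq_square power4_eq_xxxx)
  finally show "(\<integral>p. (\<Sum>i<n. fst p i * snd p i)^2 \<partial>(G \<Otimes>\<^sub>M G))  = real n * \<sigma>^4" .
qed

definition good :: "real \<Rightarrow> (nat \<Rightarrow> real) \<Rightarrow> bool" where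
  "good \<tau> \<xi> \<longleftrightarrow> \<bar>\<Sum>i<n. \<xi> i\<bar> < \<tau> * real n * \<sigma> \<and> \<bar>(\<Sum>i<n. (\<xi> i)^2) - n * \<sigma>^2\<bar> < \<tau>^2 * real n * \<sigma>^2"

lemma bad_prob:
  assumes t: "\<tau> > 0" and n: "n > 0"
  shows "measure G {\<xi> \<in> space G. \<not> good \<tau> \<xi>} \<le> 1 / (\<tau>^2 * real n) + 2 / (\<tau>^4 * real n)"
proof -
  interpret G: prob_space G by (rule G_prob[OF s])
  have sub: "{\<xi> \<in> space G. \<not> good \<tau> \<xi>} \<subseteq>
     {\<xi> \<in> space G. \<tau> * real n * \<sigma> \<le> \<bar>\<Sum>i<n. 1 * \<xi> i\<bar>} \<union> {\<xi> \<in> space G. \<tau>^2 * real n * \<sigma>^2 \<le> \<bar>\<Sum>i<n. (\<xi> i)^2 - \<sigma>^2\<bar>}"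
    by (auto simp: good_def sum_subtractf)
  have p1: "measure G {\<xi> \<in> space G. \<tau> * real n * \<sigma> \<le> \<bar>\<Sum>i<n. 1 * \<xi> i\<bar>} \<le> 1 / (\<tau>^2 * real n)"
  proof -
    have "measure G {\<xi> \<in> space G. \<tau> * real n * \<sigma> \<le> \<bar>\<Sum>i<n. 1 * \<xi> i\<bar>} \<le> (\<integral>\<xi>. (\<Sum>i<n. 1 * \<xi> i)^2 \<partial>G) / (\<tau> * real n * \<sigma>)^2"
      by (rule G.second_moment_method) (use E_lin(1)[OF s, of n "\<lambda>_. 1"] t n s in auto)
    also have "\<dots> = 1 / (\<tau>^2 * real n)"
      using E_lin(2)[OF s, of n "\<lambda>_. 1"] t n s by (simp add: power2_eq_square field_simps)
    finally show ?thesis .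
  qed
  have p2: "measure G {\<xi> \<in> space G. \<tau>^2 * real n * \<sigma>^2 \<le> \<bar>\<Sum>i<n. (\<xi> i)^2 - \<sigma>^2\<bar>} \<le> 2 / (\<tau>^4 * real n)"
  proof -
    have "measure G {\<xi> \<in> space G. \<tau>^2 * real n * \<sigma>^2 \<le> \<bar>\<Sum>i<n. (\<xi> i)^2 - \<sigma>^2\<bar>} \<le> (\<integral>\<xi>. (\<Sum>i<n. (\<xi> i)^2 - \<sigma>^2)^2 \<partial>G) / (\<tau>^2 * real n * \<sigma>^2)^2"
      by (rule G.second_moment_method) (use E_Qvar(1)[OF s, of n] t n s in auto)
    also have "\<dots> = 2 / (\<tau>^4 * real n)"
      using E_Qvar(2)[OF s, of n] t n s by (simp add: power2_eq_square power4_eq_xxxx field_simps)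
    finally show ?thesis .
  qed
  have "measure G {\<xi> \<in> space G. \<not> good \<tau> \<xi>} \<le> measure G ({\<xi> \<in> space G. \<tau> * real n * \<sigma> \<le> \<bar>\<Sum>i<n. 1 * \<xi> i\<bar>} \<union> {\<xi> \<in> space G. \<tau>^2 * real n * \<sigma>^2 \<le> \<bar>\<Sum>i<n. (\<xi> i)^2 - \<sigma>^2\<bar>})"
    by (rule G.finite_measure_mono[OF sub]) measurable
  also have "\<dots> \<le> measure G {\<xi> \<in> space G. \<tau> * real n * \<sigma> \<le> \<bar>\<Sum>i<n. 1 * \<xi> i\<bar>} + measure G {\<xi> \<in> space G. \<tau>^2 * real n * \<sigma>^2 \<le> \<bar>\<Sum>i<n. (\<xi> i)^2 - \<sigma>^2\<bar>}"
    by (rule measure_Un_le) measurable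
  finally show ?thesis using p1 p2 by simp
qed

lemma cross_prob:
  assumes t: "\<tau> > 0" and n: "n > 0"
  shows "measure (G \<Otimes>\<^sub>M G) {p \<in> space (G \<Otimes>\<^sub>M G). \<tau>^2 * real n * \<sigma>^2 \<le> \<bar>\<Sum>i<n. fst p i * snd p i\<bar>} \<le> 1 / (\<tau>^4 * real n)"
proof -
  interpret G: prob_space G by (rule G_prob[OF s])
  interpret P: pair_prob_space G G ..
  have "measure (G \<Otimes>\<^sub>M G) {p \<in> space (G \<Otimes>\<^sub>M G). \<tau>^2 * real n * \<sigma>^2 \<le> \<bar>\<Sum>i<n. fst p i * snd p i\<bar>}
     \<le> (\<integral>p. (\<Sum>i<n. fst p i * snd p i)^2 \<partial>(G \<Otimes>\<^sub>M G)) / (\<tau>^2 * real n * \<sigma>^2)^2"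
    by (rule P.second_moment_method) (use E_pair(1) t n s in auto)
  also have "\<dots> = 1 / (\<tau>^4 * real n)"
    using E_pair(2) t n s by (simp add: power2_eq_square power4_eq_xxxx field_simps)
  finally show ?thesis .
qed

end


context
  fixes \<sigma> :: real and n :: nat
  assumes s: "0 < \<sigma>"
begin

lemmas cm'[measurable] = comp_meas[OF s]

lemma pair_Times_fst:
  assumes "B \<in> sets (G \<sigma> n)"
  shows "measure (G \<sigma> n \<Otimes>\<^sub>M G \<sigma> n) (B \<times> space (G \<sigma> n)) = measure (G \<sigma> n) B"
    and "measure (G \<sigma> n \<Otimes>\<^sub>M G \<sigma> n) (space (G \<sigma> n) \<times> B) = measure (G \<sigma> n) B"
proof -
  interpret G: prob_space "G \<sigma> n" by (rule G_prob[OF s])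
  show "measure (G \<sigma> n \<Otimes>\<^sub>M G \<sigma> n) (B \<times> space (G \<sigma> n)) = measure (G \<sigma> n) B"
    using assms by (simp add: measure_def G.emeasure_pair_measure_Times G.emeasure_space_1)
  show "measure (G \<sigma> n \<Otimes>\<^sub>M G \<sigma> n) (space (G \<sigma> n) \<times> B) = measure (G \<sigma> n) B"
    using assms by (simp add: measure_def G.emeasure_pair_measure_Times G.emeasure_space_1)
qed

lemma good_L2:
  assumes g: "good \<sigma> n \<tau> \<xi>" and t: "\<tau> > 0" and n: "n > 0" and eta: "\<eta> = 2 * \<tau>^2" "\<eta> \<le> 1"
  shows "L2_set (pp n \<xi>) {..<n} \<ge> (1 - \<eta>) * (\<sigma> * sqrt n)"
proof -
  let ?S = "\<Sum>i<n. \<xi> i" and ?Q = "\<Sum>i<n. (\<xi> i)^2"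
  have S: "\<bar>?S\<bar> < \<tau> * real n * \<sigma>" and Q: "\<bar>?Q - real n * \<sigma>^2\<bar> < \<tau>^2 * real n * \<sigma>^2"
    using g by (auto simp: good_def[OF s])
  have "?S^2 < (\<tau> * real n * \<sigma>)^2" using S by (metis abs_ge_zero power2_abs power_strict_mono zero_less_numeral)
  then have S2: "?S^2 / real n < \<tau>^2 * real n * \<sigma>^2" using n by (simp add: divide_less_eq power_mult_distrib power2_eq_square algebra_simps)
  have "(\<Sum>i<n. (pp n \<xi> i)^2) = ?Q - ?S^2 / real n" by (rule pp_sq)
  also have "\<dots> \<ge> (1 - \<eta>) * (real n * \<sigma>^2)" using S2 Q eta by (simp add: algebra_simps abs_less_iff)
  finally have "(1 - \<eta>) * (real n * \<sigma>^2) \<le> (\<Sum>i<n. (pp n \<xi> i)^2)" .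
  moreover have "((1 - \<eta>) * (\<sigma> * sqrt n))^2 \<le> (1 - \<eta>) * (real n * \<sigma>^2)"
  proof -
    have "(1 - \<eta>)^2 \<le> (1 - \<eta>)" using eta t by (simp add: power2_eq_square mult_left_le_one_le)
    then have "(1 - \<eta>)^2 * (real n * \<sigma>^2) \<le> (1 - \<eta>) * (real n * \<sigma>^2)" by (intro mult_right_mono) auto
    moreover have "((1 - \<eta>) * (\<sigma> * sqrt n))^2 = (1 - \<eta>)^2 * (real n * \<sigma>^2)"
      by (simp add: power_mult_distrib)
    ultimately show ?thesis by simp
  qed
  ultimately have "((1 - \<eta>) * (\<sigma> * sqrt n))^2 \<le> (L2_set (pp n \<xi>) {..<n})^2"
    by (simp add: L2_set_def sum_nonneg)
  then show ?thesis by (rule power2_le_imp_le) simp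
qed

lemma good_cross:
  assumes g: "good \<sigma> n \<tau> \<xi>" "good \<sigma> n \<tau> \<xi>'" and c: "\<bar>\<Sum>i<n. \<xi> i * \<xi>' i\<bar> < \<tau>^2 * real n * \<sigma>^2"
    and t: "\<tau> > 0" and n: "n > 0" and eta: "\<eta> = 2 * \<tau>^2"
  shows "\<bar>\<Sum>i<n. pp n \<xi> i * pp n \<xi>' i\<bar> \<le> \<eta> * (\<sigma> * sqrt n)^2"
proof -
  have S: "\<bar>\<Sum>i<n. \<xi> i\<bar> < \<tau> * real n * \<sigma>" "\<bar>\<Sum>i<n. \<xi>' i\<bar> < \<tau> * real n * \<sigma>"
    using g by (auto simp: good_def[OF s])
  have "\<bar>(\<Sum>i<n. \<xi> i) * (\<Sum>i<n. \<xi>' i)\<bar> \<le> (\<tau> * real n * \<sigma>) * (\<tau> * real n * \<sigma>)"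
    unfolding abs_mult using S by (intro mult_mono) auto
  then have "\<bar>(\<Sum>i<n. \<xi> i) * (\<Sum>i<n. \<xi>' i) / real n\<bar> \<le> \<tau>^2 * real n * \<sigma>^2"
    using n by (simp add: power2_eq_square divide_le_eq algebra_simps)
  moreover have "\<eta> * (\<sigma> * sqrt n)^2 = 2 * (\<tau>^2 * real n * \<sigma>^2)"
    using eta by (simp add: power_mult_distrib)
  moreover note abs_triangle_ineq4[of "\<Sum>i<n. \<xi> i * \<xi>' i" "(\<Sum>i<n. \<xi> i) * (\<Sum>i<n. \<xi>' i) / real n"]
  ultimately show ?thesis unfolding pp_prod using c by linarith
qed

lemma L2_pp_meas[measurable]: "(\<lambda>\<xi>. L2_set (pp n \<xi>) {..<n}) \<in> borel_measurable (G \<sigma> n)"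
  unfolding L2_set_def pp_def by measurable

lemma m_le:
  assumes n: "n > 0"
  shows "integrable (G \<sigma> n) (\<lambda>\<xi>. L2_set (pp n \<xi>) {..<n})"
    and "(\<integral>\<xi>. L2_set (pp n \<xi>) {..<n} \<partial>G \<sigma> n) \<le> \<sigma> * sqrt n"
proof -
  interpret G: prob_space "G \<sigma> n" by (rule G_prob[OF s])
  define R where "R = \<sigma> * sqrt n"
  have R: "R > 0" using s n by (simp add: R_def)
  have R2: "R^2 = real n * \<sigma>^2" using n by (simp add: R_def power_mult_distrib)
  have pt: "L2_set (pp n \<xi>) {..<n} \<le> ((\<Sum>i<n. (\<xi> i)^2) / R + R) / 2" for \<xi>
  proof -
    let ?Q = "\<Sum>i<n. (\<xi> i)^2"
    have "L2_set (pp n \<xi>) {..<n} \<le> sqrt ?Q" using L2_pp_le[of n \<xi>] by (simp add: L2_set_def)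
    also have "sqrt ?Q \<le> (?Q / R + R) / 2"
    proof -
      have q: "?Q \<ge> 0" by (simp add: sum_nonneg)
      have "0 \<le> (sqrt ?Q - R)^2" by simp
      then have "2 * R * sqrt ?Q \<le> ?Q + R^2" using q by (simp add: power2_eq_square algebra_simps)
      then show ?thesis using R by (simp add: field_simps power2_eq_square)
    qed
    finally show ?thesis .
  qed
  have bi: "integrable (G \<sigma> n) (\<lambda>\<xi>. ((\<Sum>i<n. (\<xi> i)^2) / R + R) / 2)"
    using E_Q(1)[OF s, of n] by simp
  show I: "integrable (G \<sigma> n) (\<lambda>\<xi>. L2_set (pp n \<xi>) {..<n})"
  proof (rule Bochner_Integration.integrable_bound[OF bi])
    show "AE x in G \<sigma> n. norm (L2_set (pp n x) {..<n}) \<le> norm (((\<Sum>i<n. (x i)^2) / R + R) / 2)"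
      using pt by (intro AE_I2) (smt (verit) L2_set_nonneg real_norm_def)
  qed simp
  have "(\<integral>\<xi>. L2_set (pp n \<xi>) {..<n} \<partial>G \<sigma> n) \<le> (\<integral>\<xi>. ((\<Sum>i<n. (\<xi> i)^2) / R + R) / 2 \<partial>G \<sigma> n)"
    by (rule integral_mono[OF I bi pt])
  also have "\<dots> = ((real n * \<sigma>^2) / R + R) / 2"
    using E_Q[OF s, of n] by (simp add: G.prob_space)
  also have "\<dots> = R" using R R2[symmetric] by (simp add: field_simps power2_eq_square)
  finally show "(\<integral>\<xi>. L2_set (pp n \<xi>) {..<n} \<partial>G \<sigma> n) \<le> \<sigma> * sqrt n" unfolding R_def .
qed

lemma m_pos:
  fixes \<tau> :: real
  assumes n: "n > 0" and t: "\<tau> > 0" "\<tau>^2 \<le> 1/4" and small: "1 / (\<tau>^2 * n) + 2 / (\<tau>^4 * n) < 1"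
  shows "(\<integral>\<xi>. L2_set (pp n \<xi>) {..<n} \<partial>G \<sigma> n) > 0"
proof (rule ccontr)
  interpret G: prob_space "G \<sigma> n" by (rule G_prob[OF s])
  assume neg: "\<not> ?thesis"
  have z: "(\<integral>\<xi>. L2_set (pp n \<xi>) {..<n} \<partial>G \<sigma> n) = 0"
  proof -
    have "(\<integral>\<xi>. L2_set (pp n \<xi>) {..<n} \<partial>G \<sigma> n) \<ge> 0" by (rule Bochner_Integration.integral_nonneg) simp
    then show ?thesis using neg by linarith
  qed
  have "AE \<xi> in G \<sigma> n. L2_set (pp n \<xi>) {..<n} = 0"
    using integral_nonneg_eq_0_iff_AE[OF m_le(1)[OF n]] z by simp
  then have e0: "emeasure (G \<sigma> n) {\<xi> \<in> space (G \<sigma> n). \<not> L2_set (pp n \<xi>) {..<n} = 0} = 0"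
    by (subst (asm) AE_iff_measurable[OF _ refl]) measurable
  have sub: "{\<xi> \<in> space (G \<sigma> n). good \<sigma> n \<tau> \<xi>} \<subseteq> {\<xi> \<in> space (G \<sigma> n). \<not> L2_set (pp n \<xi>) {..<n} = 0}"
  proof safe
    fix \<xi> assume "good \<sigma> n \<tau> \<xi>" "L2_set (pp n \<xi>) {..<n} = 0"
    moreover have "(1 - 2 * \<tau>^2) * (\<sigma> * sqrt n) > 0" using t s n by simp
    ultimately show False using good_L2[of \<tau> \<xi> "2 * \<tau>^2", OF _ t(1) n refl] t by simp
  qed
  have "measure (G \<sigma> n) {\<xi> \<in> space (G \<sigma> n). good \<sigma> n \<tau> \<xi>} = 0"
  proof -
    have "emeasure (G \<sigma> n) {\<xi> \<in> space (G \<sigma> n). good \<sigma> n \<tau> \<xi>} \<le> emeasure (G \<sigma> n) {\<xi> \<in> space (G \<sigma> n). \<not> L2_set (pp n \<xi>) {..<n} = 0}"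
      by (rule emeasure_mono[OF sub]) measurable
    then show ?thesis using e0 by (simp add: measure_def)
  qed
  moreover have "measure (G \<sigma> n) {\<xi> \<in> space (G \<sigma> n). good \<sigma> n \<tau> \<xi>} = 1 - measure (G \<sigma> n) {\<xi> \<in> space (G \<sigma> n). \<not> good \<sigma> n \<tau> \<xi>}"
  proof -
    have eq: "{\<xi> \<in> space (G \<sigma> n). good \<sigma> n \<tau> \<xi>} = space (G \<sigma> n) - {\<xi> \<in> space (G \<sigma> n). \<not> good \<sigma> n \<tau> \<xi>}" by auto
    have "{\<xi> \<in> space (G \<sigma> n). \<not> good \<sigma> n \<tau> \<xi>} \<in> sets (G \<sigma> n)"
      unfolding good_def[OF s] by measurable
    then show ?thesis unfolding eq by (rule G.prob_compl)
  qed
  ultimately show False using bad_prob[OF s t(1) n] small by simp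
qed

end


lemma pp_cong: "(\<And>j. j < n \<Longrightarrow> y j = z j) \<Longrightarrow> y i = z i \<Longrightarrow> pp n y i = pp n z i"
  unfolding pp_def by (metis (no_types, lifting) lessThan_iff sum.cong)

lemma vnorm_carrier: "v \<in> carrier_vec n \<Longrightarrow> vnorm v = L2_set (\<lambda>i. v $ i) {..<n}"
  by (simp add: vnorm_def scalar_prod_def L2_set_def atLeast0LessThan power2_eq_square)

lemma LN_eq:
  assumes s: "s \<in> carrier_vec n"
  shows "layer_norm n (s + vec n \<xi>) = vec n (\<lambda>i. (pp n (\<lambda>i. s $ i) i + pp n \<xi> i) / L2_set (\<lambda>i. pp n (\<lambda>i. s $ i) i + pp n \<xi> i) {..<n})"
proof -
  have c: "s + vec n \<xi> \<in> carrier_vec n" using s by simp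
  have pz: "pp n (\<lambda>i. (s + vec n \<xi>) $ i) i = pp n (\<lambda>i. s $ i) i + pp n \<xi> i" if "i < n" for i
  proof -
    have "pp n (\<lambda>i. (s + vec n \<xi>) $ i) i = pp n (\<lambda>i. s $ i + \<xi> i) i"
      using s that by (intro pp_cong) auto
    then show ?thesis by (simp add: pp_add)
  qed
  have L: "L2_set (pp n (\<lambda>i. (s + vec n \<xi>) $ i)) {..<n} = L2_set (\<lambda>i. pp n (\<lambda>i. s $ i) i + pp n \<xi> i) {..<n}"
    using pz by (intro L2_set_cong) auto
  show ?thesis unfolding layer_norm_eq[OF c] L
    by (rule eq_vecI) (auto simp: pz)
qed

lemma vnorm_pp_vec: "vnorm (proj_perp n *\<^sub>v vec n \<xi>) = L2_set (pp n \<xi>) {..<n}"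
proof -
  have "vnorm (proj_perp n *\<^sub>v vec n \<xi>) = L2_set (pp n (\<lambda>i. vec n \<xi> $ i)) {..<n}"
    by (simp add: proj_perp_mult vnorm_vec)
  also have "\<dots> = L2_set (pp n \<xi>) {..<n}"
    by (intro L2_set_cong refl pp_cong) auto
  finally show ?thesis .
qed

lemma lin_aux: "(X::real) \<le> Y \<Longrightarrow> 2 * (X + 2 * Y) + Y \<le> 7 * Y" by (simp add: algebra_simps)

theorem theorem1:
  fixes \<epsilon> \<delta> :: real
  assumes "\<epsilon> > 0" and "0 < \<delta>" and "\<delta> < 1"
  shows "\<exists>C c :: real. c > 0 \<and>
    (\<forall>(n::nat) (M::real mat) (\<nu>::real) (x::real vec) (x'::real vec).
       n \<ge> 3 \<longrightarrow> doubly_stochastic n M \<longrightarrow> primitive_mat n M \<longrightarrow> \<nu> > 0 \<longrightarrow>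
       x \<in> carrier_vec n \<longrightarrow> x' \<in> carrier_vec n \<longrightarrow>
       scalar_prod x (ones_vec n) = 0 \<longrightarrow> scalar_prod x' (ones_vec n) = 0 \<longrightarrow>
       (let s = M *\<^sub>v x; s' = M *\<^sub>v x';
            G = gauss_vec n (\<nu> / sqrt (real n));
            \<gamma> = max (vnorm s) (vnorm s') /
                (\<integral>\<xi>. vnorm (proj_perp n *\<^sub>v vec n \<xi>) \<partial>G)
        in \<gamma> \<le> 1/8 \<longrightarrow>
           measure (G \<Otimes>\<^sub>M G)
             {(\<xi>, \<xi>') \<in> space (G \<Otimes>\<^sub>M G).
                \<bar>scalar_prod (layer_norm n (s + vec n \<xi>)) (layer_norm n (s' + vec n \<xi>'))\<bar>
                  \<le> \<epsilon> + 8 * \<gamma>}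
           \<ge> 1 - \<delta> - C * exp (- c * real n * \<epsilon>\<^sup>2)))"
proof -
  note e = assms
  define \<eta> where "\<eta> = min (1/8) (\<epsilon>/2)"
  have eta: "0 < \<eta>" "\<eta> \<le> 1/8" "\<eta> \<le> \<epsilon>/2" using e by (auto simp: \<eta>_def)
  define \<tau> where "\<tau> = sqrt (\<eta>/2)"
  have tau: "\<tau> > 0" "\<tau>^2 = \<eta>/2" "\<tau>^4 = \<eta>^2/4" "\<tau>^2 \<le> 1/4"
    using eta by (auto simp: \<tau>_def power2_eq_square power4_eq_xxxx)
  have eta2: "\<eta> = 2 * \<tau>^2" using tau by simp
  define K where "K = 28 / (\<eta>^2 * \<delta>)"
  define C where "C = exp (K * \<epsilon>^2)"
  show ?thesis
  proof (rule exI[of _ C], rule exI[of _ 1], intro conjI allI impI)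
    fix n :: nat and M :: "real mat" and \<nu> :: real and x x' :: "real vec"
    assume n3: "n \<ge> 3" and ds: "doubly_stochastic n M" and "primitive_mat n M" and nu: "\<nu> > 0"
      and x: "x \<in> carrier_vec n" and x': "x' \<in> carrier_vec n"
      and "scalar_prod x (ones_vec n) = 0" "scalar_prod x' (ones_vec n) = 0"
    have n0: "n > 0" using n3 by simp
    define s where "s = M *\<^sub>v x"
    define s' where "s' = M *\<^sub>v x'"
    define \<sigma> where "\<sigma> = \<nu> / sqrt (real n)"
    have sig: "\<sigma> > 0" using nu n0 by (simp add: \<sigma>_def)
    have sn: "\<sigma> * sqrt n = \<nu>" using n0 by (simp add: \<sigma>_def)
    define m where "m = (\<integral>\<xi>. vnorm (proj_perp n *\<^sub>v vec n \<xi>) \<partial>gauss_vec n \<sigma>)"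
    have m_eq: "m = (\<integral>\<xi>. L2_set (pp n \<xi>) {..<n} \<partial>gauss_vec n \<sigma>)"
      unfolding m_def vnorm_pp_vec ..
    define \<gamma> where "\<gamma> = max (vnorm s) (vnorm s') / m"
    show "let s = M *\<^sub>v x; s' = M *\<^sub>v x';
            G = gauss_vec n (\<nu> / sqrt (real n));
            \<gamma> = max (vnorm s) (vnorm s') /
                (\<integral>\<xi>. vnorm (proj_perp n *\<^sub>v vec n \<xi>) \<partial>G)
        in \<gamma> \<le> 1/8 \<longrightarrow>
           measure (G \<Otimes>\<^sub>M G)
             {(\<xi>, \<xi>') \<in> space (G \<Otimes>\<^sub>M G).
                \<bar>scalar_prod (layer_norm n (s + vec n \<xi>)) (layer_norm n (s' + vec n \<xi>'))\<bar>
                  \<le> \<epsilon> + 8 * \<gamma>}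
           \<ge> 1 - \<delta> - C * exp (- 1 * real n * \<epsilon>\<^sup>2)"
      unfolding Let_def s_def[symmetric] s'_def[symmetric] \<sigma>_def[symmetric] m_def[symmetric] \<gamma>_def[symmetric]
    proof (intro impI)
      assume g8: "\<gamma> \<le> 1/8"
      let ?H = "gauss_vec n \<sigma> \<Otimes>\<^sub>M gauss_vec n \<sigma>"
      let ?T = "{(\<xi>, \<xi>') \<in> space ?H.
                \<bar>scalar_prod (layer_norm n (s + vec n \<xi>)) (layer_norm n (s' + vec n \<xi>'))\<bar> \<le> \<epsilon> + 8 * \<gamma>}"
      show "measure ?H ?T \<ge> 1 - \<delta> - C * exp (- 1 * real n * \<epsilon>\<^sup>2)"
      proof (cases "real n < K")
        case True
        have "C * exp (- 1 * real n * \<epsilon>\<^sup>2) = exp (K * \<epsilon>^2) * exp (- (real n * \<epsilon>^2))"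
          by (simp add: C_def)
        also have "\<dots> = exp (K * \<epsilon>^2 + - (real n * \<epsilon>^2))" by (rule exp_add[symmetric])
        also have "\<dots> = exp ((K - real n) * \<epsilon>^2)" by (simp add: algebra_simps)
        also have "\<dots> \<ge> 1" using True by simp
        finally have "1 - \<delta> - C * exp (- 1 * real n * \<epsilon>\<^sup>2) \<le> 0" using e by linarith
        then show ?thesis using measure_nonneg[of ?H ?T] by linarith
      next
        case False
        then have nK: "real n \<ge> K" by simp
        interpret G: prob_space "gauss_vec n \<sigma>" by (rule G_prob[OF sig])
        interpret P: pair_prob_space "gauss_vec n \<sigma>" "gauss_vec n \<sigma>" ..
        note cm2[measurable] = comp_meas[OF sig]
        have Kpos: "K > 0" using eta e by (simp add: K_def)
        have t4: "7 / (\<tau>^4 * real n) \<le> \<delta>"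
        proof -
          have "7 / (\<tau>^4 * real n) = 28 / (\<eta>^2 * real n)"
          proof -
            have e4: "\<eta>^2 = 4 * \<tau>^4" using tau(3) by simp
            show ?thesis using tau(1) n0 unfolding e4 by (simp add: field_simps)
          qed
          also have "\<dots> \<le> 28 / (\<eta>^2 * K)" using nK Kpos eta by (intro divide_left_mono mult_left_mono) auto
          also have "\<dots> = \<delta>" using eta e by (simp add: K_def)
          finally show ?thesis .
        qed
        have t2le: "1 / (\<tau>^2 * real n) \<le> 1 / (\<tau>^4 * real n)"
        proof -
          have "\<tau>^4 \<le> \<tau>^2" using tau by (simp add: power4_eq_xxxx power2_eq_square mult_le_one)
          then show ?thesis using tau n0 by (intro divide_left_mono mult_right_mono) auto
        qed
        have small: "1 / (\<tau>^2 * n) + 2 / (\<tau>^4 * n) < 1" using t4 t2le e by simp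
        have mpos: "m > 0" unfolding m_eq by (rule m_pos[OF sig n0 tau(1) tau(4) small])
        have mle: "m \<le> \<nu>" unfolding m_eq sn[symmetric] by (rule m_le(2)[OF sig n0])
        have Mc: "M \<in> carrier_mat n n" using ds by (simp add: doubly_stochastic_def)
        have sc: "s \<in> carrier_vec n" "s' \<in> carrier_vec n" using Mc x x' by (auto simp: s_def s'_def)
        have g0: "\<gamma> \<ge> 0" unfolding \<gamma>_def
          using mpos vnorm_carrier[OF sc(1)] L2_set_nonneg[of "\<lambda>i. s $ i" "{..<n}"]
          by (intro divide_nonneg_pos) (auto simp: le_max_iff_disj)
        define a where "a = pp n (\<lambda>i. s $ i)"
        define b where "b = pp n (\<lambda>i. s' $ i)"
        have maxg: "max (vnorm s) (vnorm s') = \<gamma> * m" using mpos by (simp add: \<gamma>_def)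
        have gm: "\<gamma> * m \<le> \<gamma> * \<nu>" by (rule mult_left_mono[OF mle g0])
        have La: "L2_set a {..<n} \<le> \<gamma> * \<nu>"
          using L2_pp_le[of n "\<lambda>i. s $ i"] vnorm_carrier[OF sc(1)] maxg gm unfolding a_def
          by (metis max.bounded_iff order.trans)
        have Lb: "L2_set b {..<n} \<le> \<gamma> * \<nu>"
          using L2_pp_le[of n "\<lambda>i. s' $ i"] vnorm_carrier[OF sc(2)] maxg gm unfolding b_def
          by (metis max.bounded_iff order.trans)
        define F where "F p = (\<Sum>i<n. ((a i + pp n (fst p) i) / L2_set (\<lambda>i. a i + pp n (fst p) i) {..<n}) *
                                    ((b i + pp n (snd p) i) / L2_set (\<lambda>i. b i + pp n (snd p) i) {..<n}))" for p
        have Feq: "scalar_prod (layer_norm n (s + vec n \<xi>)) (layer_norm n (s' + vec n \<xi>')) = F (\<xi>, \<xi>')" for \<xi> \<xi>'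
          unfolding LN_eq[OF sc(1)] LN_eq[OF sc(2)] scalar_prod_vec F_def a_def b_def by simp
        have Teq: "?T = {p \<in> space ?H. \<bar>F p\<bar> \<le> \<epsilon> + 8 * \<gamma>}"
          by (auto simp: Feq)
        have Fm: "F \<in> borel_measurable ?H"
          unfolding F_def pp_def L2_set_def by measurable
        have Tm: "?T \<in> sets ?H" unfolding Teq using Fm by measurable
        define Gd where "Gd = {p \<in> space ?H. good \<sigma> n \<tau> (fst p) \<and> good \<sigma> n \<tau> (snd p) \<and>
                              \<bar>\<Sum>i<n. fst p i * snd p i\<bar> < \<tau>^2 * real n * \<sigma>^2}"
        have Gdm: "Gd \<in> sets ?H" unfolding Gd_def good_def[OF sig] by measurable
        have GdT: "Gd \<subseteq> ?T"
        proof
          fix p assume p: "p \<in> Gd"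
          have w: "L2_set (pp n (fst p)) {..<n} \<ge> (1 - \<eta>) * \<nu>"
            using good_L2[OF sig _ tau(1) n0 eta2] p eta unfolding Gd_def sn by auto
          have w': "L2_set (pp n (snd p)) {..<n} \<ge> (1 - \<eta>) * \<nu>"
            using good_L2[OF sig _ tau(1) n0 eta2] p eta unfolding Gd_def sn by auto
          have ww: "\<bar>\<Sum>i<n. pp n (fst p) i * pp n (snd p) i\<bar> \<le> \<eta> * \<nu>^2"
            using good_cross[OF sig _ _ _ tau(1) n0 eta2] p unfolding Gd_def sn by auto
          have "\<bar>F p\<bar> \<le> \<epsilon> + 8 * \<gamma>"
            unfolding F_def
            by (rule core_ineq[OF La Lb g0 g8 eta nu w w' ww])
          then show "p \<in> ?T" using p unfolding Teq Gd_def by auto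
        qed
        define B where "B = {\<xi> \<in> space (gauss_vec n \<sigma>). \<not> good \<sigma> n \<tau> \<xi>}"
        have Bm: "B \<in> sets (gauss_vec n \<sigma>)" unfolding B_def good_def[OF sig] by measurable
        define Cr where "Cr = {p \<in> space ?H. \<tau>^2 * real n * \<sigma>^2 \<le> \<bar>\<Sum>i<n. fst p i * snd p i\<bar>}"
        have Crm: "Cr \<in> sets ?H" unfolding Cr_def by measurable
        have B1: "B \<times> space (gauss_vec n \<sigma>) \<in> sets ?H" "space (gauss_vec n \<sigma>) \<times> B \<in> sets ?H"
          using Bm by auto
        have compl: "space ?H - Gd \<subseteq> (B \<times> space (gauss_vec n \<sigma>) \<union> space (gauss_vec n \<sigma>) \<times> B) \<union> Cr"
          by (auto simp: Gd_def B_def Cr_def space_pair_measure)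
        have "measure ?H (space ?H - Gd) \<le> measure ?H ((B \<times> space (gauss_vec n \<sigma>) \<union> space (gauss_vec n \<sigma>) \<times> B) \<union> Cr)"
          using compl B1 Crm by (intro P.finite_measure_mono) auto
        also have "\<dots> \<le> measure ?H (B \<times> space (gauss_vec n \<sigma>) \<union> space (gauss_vec n \<sigma>) \<times> B) + measure ?H Cr"
          using B1 Crm by (intro measure_Un_le) auto
        also have "\<dots> \<le> (measure ?H (B \<times> space (gauss_vec n \<sigma>)) + measure ?H (space (gauss_vec n \<sigma>) \<times> B)) + measure ?H Cr"
          using B1 by (intro add_right_mono measure_Un_le) auto
        also have "\<dots> = 2 * measure (gauss_vec n \<sigma>) B + measure ?H Cr"
          using pair_Times_fst[OF sig Bm] by simp
        also have "\<dots> \<le> 2 * (1 / (\<tau>^2 * n) + 2 * (1 / (\<tau>^4 * n))) + 1 / (\<tau>^4 * n)"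
          using bad_prob[OF sig tau(1) n0] cross_prob[OF sig tau(1) n0] unfolding B_def Cr_def
          by (intro add_mono mult_left_mono) simp_all
        also have "\<dots> \<le> 7 * (1 / (\<tau>^4 * n))" by (rule lin_aux[OF t2le])
        also have "\<dots> \<le> \<delta>" using t4 by simp
        finally have cm: "measure ?H (space ?H - Gd) \<le> \<delta>" .
        have "measure ?H Gd = 1 - measure ?H (space ?H - Gd)"
        proof -
          have "space ?H - (space ?H - Gd) = Gd" using Gdm sets.sets_into_space by blast
          then show ?thesis using P.prob_compl[of "space ?H - Gd"] Gdm by auto
        qed
        then have "measure ?H Gd \<ge> 1 - \<delta>" using cm by simp
        moreover have "measure ?H Gd \<le> measure ?H ?T" by (rule P.finite_measure_mono[OF GdT Tm])
        moreover have "C * exp (- 1 * real n * \<epsilon>\<^sup>2) \<ge> 0" by (simp add: C_def)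
        ultimately show ?thesis by linarith
      qed
    qed
  qed simp
qed

end
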